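(* Let $\mathcal{H}$ be a Hilbert space of dimension $d$ with $2 \le d < \infty$, let $X$ be a set with $d^2$ elements, and let $\mathbf{U}=\{U_x : x\in X\}$ and $\mathbf{U}'=\{U'_x : x \in X\}$ be unitary bases for $\mathcal{H}$. Then the following are equivalent: (i) $\mathbf{U}$ is equivalent to $\mathbf{U}'$; (ii) for some $\mathbf{U}$-associated tag $\mathbf{T}=(x_0,U_{x_0},\mathbf{W})$ and some $\mathbf{U}'$-associated tag $\mathbf{T}'=(x_0',U'_{x_0'},\mathbf{W}')$, the unitary system $\mathbf{W}$ is collectively unitarily equivalent to $\mathbf{W}'$; (iii) for each $\mathbf{U}$-associated tag $\mathbf{T}=(x_0,U_{x_0},\mathbf{W})$ there is a $\mathbf{U}'$-associated tag $\mathbf{T}'=(x_0',U'_{x_0'},\mathbf{W}')$ such that $\mathbf{W}$ is collectively unitarily equivalent to $\mathbf{W}'$.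
   Context: $\mathcal{U}(\mathcal{H})$ denotes the unitaries on $\mathcal{H}$. A unitary basis (UB) is a family $\mathbf{U}=\{U_x: x\in X\}$ of unitaries on $\mathcal{H}$ with $\operatorname{tr}(U_x^*U_y)=d\,\delta_{xy}$ for $x,y\in X$. Two unitary bases $\mathbf{U}$, $\mathbf{U}'$ are equivalent if there exist unitaries $V_1,V_2$ on $\mathcal{H}$ and a bijection (relabelling) $x\mapsto x'$ of $X$ such that $U'_{x'}=V_1U_xV_2$ for all $x\in X$. For $x_0\in X$, the $\mathbf{U}$-associated tag at $x_0$ is the triple $(x_0,U_{x_0},\mathbf{W})$ where $\mathbf{W}=\{W_x=U_{x_0}^*U_x : x\in X, x\neq x_0\}$ (a set of unitaries). For subsets $\mathcal{F},\mathcal{G}$ of bounded operators on $\mathcal{H}$, $\mathcal{F}$ is collectively unitarily equivalent (CUE) to $\mathcal{G}$ if there is a unitary $V$ on $\mathcal{H}$ with $\mathcal{G}=\{V^*AV : A\in\mathcal{F}\}$. *)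

theory Defs
  imports "HOL-Analysis.Analysis"
begin

text \<open>Operators on a d-dimensional Hilbert space are modelled as complex
  matrices indexed by a finite type 'n with CARD('n) = d.\<close>

definition adj :: "complex^'n^'n \<Rightarrow> complex^'n^'n" where
  "adj A = (\<chi> i j. cnj (A $ j $ i))"

definition unitary_mat :: "complex^'n^'n \<Rightarrow> bool" where
  "unitary_mat U \<longleftrightarrow> adj U ** U = mat 1 \<and> U ** adj U = mat 1"

definition unitary_basis :: "'x set \<Rightarrow> ('x \<Rightarrow> complex^'n^'n) \<Rightarrow> bool" where
  "unitary_basis X U \<longleftrightarrow>
     (\<forall>x\<in>X. unitary_mat (U x)) \<and>
     (\<forall>x\<in>X. \<forall>y\<in>X. trace (adj (U x) ** U y) = (if x = y then of_nat CARD('n) else 0))"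

definition ub_equivalent :: "'x set \<Rightarrow> ('x \<Rightarrow> complex^'n^'n) \<Rightarrow> ('x \<Rightarrow> complex^'n^'n) \<Rightarrow> bool" where
  "ub_equivalent X U U' \<longleftrightarrow>
     (\<exists>V1 V2 \<sigma>. unitary_mat V1 \<and> unitary_mat V2 \<and> bij_betw \<sigma> X X \<and>
        (\<forall>x\<in>X. U' (\<sigma> x) = V1 ** U x ** V2))"

definition tag_system :: "'x set \<Rightarrow> ('x \<Rightarrow> complex^'n^'n) \<Rightarrow> 'x \<Rightarrow> (complex^'n^'n) set" where
  "tag_system X U x0 = {adj (U x0) ** U x | x. x \<in> X \<and> x \<noteq> x0}"

definition CUE :: "(complex^'n^'n) set \<Rightarrow> (complex^'n^'n) set \<Rightarrow> bool" where
  "CUE F G \<longleftrightarrow> (\<exists>V. unitary_mat V \<and> G = (\<lambda>A. adj V ** A ** V) ` F)"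

end

theory Submission
  imports Defs
begin

lemma adj_mult: "adj (A ** B) = adj B ** adj (A::complex^'n^'n)"
  by (simp add: adj_def matrix_matrix_mult_def vec_eq_iff mult.commute)

lemma adj_adj: "adj (adj (A::complex^'n^'n)) = A"
  by (simp add: adj_def vec_eq_iff)

lemma unit_l: "unitary_mat U \<Longrightarrow> adj U ** (U ** M) = M"
  by (simp add: unitary_mat_def matrix_mul_assoc)
lemma unit_r: "unitary_mat U \<Longrightarrow> U ** (adj U ** M) = M"
  by (simp add: unitary_mat_def matrix_mul_assoc)
lemma unit_l2: "unitary_mat U \<Longrightarrow> adj U ** U = mat 1"
  by (simp add: unitary_mat_def)
lemma unit_r2: "unitary_mat U \<Longrightarrow> U ** adj U = mat 1"
  by (simp add: unitary_mat_def)

lemma unitary_mult: "unitary_mat A \<Longrightarrow> unitary_mat B \<Longrightarrow> unitary_mat (A ** B)"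
proof -
  assume a: "unitary_mat A" "unitary_mat B"
  have "adj (A ** B) ** (A ** B) = adj B ** (adj A ** (A ** B))"
    by (simp only: adj_mult matrix_mul_assoc)
  also have "\<dots> = mat 1" using a by (simp only: unit_l unit_l2)
  finally have 1: "adj (A ** B) ** (A ** B) = mat 1" .
  have "(A ** B) ** adj (A ** B) = A ** (B ** (adj B ** adj A))"
    by (simp only: adj_mult matrix_mul_assoc)
  also have "\<dots> = mat 1" using a by (simp only: unit_r unit_r2)
  finally show ?thesis using 1 unfolding unitary_mat_def by blast
qed

lemma unitary_adj: "unitary_mat A \<Longrightarrow> unitary_mat (adj A)"
  by (simp only: unitary_mat_def adj_adj) 

lemma ub_inj: fixes U :: "'x \<Rightarrow> complex^'n^'n" assumes "unitary_basis X U" "x \<in> X" "y \<in> X" "U x = U y"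
  shows "x = y"
proof (rule ccontr)
  assume "x \<noteq> y"
  have tr: "\<forall>x\<in>X. \<forall>y\<in>X. trace (adj (U x) ** U y) = (if x = y then of_nat CARD('n) else 0)"
    using assms(1) unfolding unitary_basis_def by blast
  have "trace (adj (U x) ** U y) = (if x = y then of_nat CARD('n) else 0)" using tr assms(2,3) by blast
  then have 1: "trace (adj (U x) ** U y) = 0" using \<open>x \<noteq> y\<close> by (simp only: if_False simp_thms)
  have "trace (adj (U x) ** U x) = (if x = x then of_nat CARD('n) else 0)" using tr assms(2) by blast
  then have 2: "trace (adj (U x) ** U x) = of_nat CARD('n)" by (simp only: if_True simp_thms)
  have 3: "(of_nat CARD('n) :: complex) \<noteq> 0" by simp
  show False using 1 2 3 assms(4) by metis
qed

lemma W_inj: fixes U :: "'x \<Rightarrow> complex^'n^'n" assumes "unitary_basis X U" "x0 \<in> X" "x \<in> X" "y \<in> X"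
  "adj (U x0) ** U x = adj (U x0) ** U y" shows "x = y"
proof -
  have u: "unitary_mat (U x0)" using assms(1,2) unfolding unitary_basis_def by blast
  have "U x0 ** (adj (U x0) ** U x) = U x0 ** (adj (U x0) ** U y)" using assms(5) by (rule arg_cong)
  then have "U x = U y" by (simp only: unit_r[OF u])
  then show ?thesis by (rule ub_inj[OF assms(1,3,4)])
qed
lemma eq_imp_all:
  fixes U U' :: "'x \<Rightarrow> complex^'n^'n"
  assumes ubeq: "ub_equivalent X U U'" and x0: "x0 \<in> X"
  shows "\<exists>x0'\<in>X. CUE (tag_system X U x0) (tag_system X U' x0')"
proof -
  obtain V1 V2 \<sigma> where v1: "unitary_mat V1" and v2: "unitary_mat V2" and bij: "bij_betw \<sigma> X X"
    and eq: "\<forall>x\<in>X. U' (\<sigma> x) = V1 ** U x ** V2"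
    using ubeq unfolding ub_equivalent_def by blast
  have key: "adj (U' (\<sigma> x0)) ** U' (\<sigma> x) = adj V2 ** (adj (U x0) ** U x) ** V2" if x: "x \<in> X" for x
  proof -
    have e0: "U' (\<sigma> x0) = V1 ** U x0 ** V2" using eq x0 by blast
    have e1: "U' (\<sigma> x) = V1 ** U x ** V2" using eq x by blast
    have "adj (U' (\<sigma> x0)) ** U' (\<sigma> x) = adj (V1 ** U x0 ** V2) ** (V1 ** U x ** V2)"
      by (simp only: e0 e1)
    also have "\<dots> = adj V2 ** (adj (U x0) ** (adj V1 ** (V1 ** (U x ** V2))))"
      by (simp only: adj_mult matrix_mul_assoc)
    also have "\<dots> = adj V2 ** (adj (U x0) ** (U x ** V2))"
      by (simp only: unit_l[OF v1])
    also have "\<dots> = adj V2 ** (adj (U x0) ** U x) ** V2"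
      by (simp only: matrix_mul_assoc)
    finally show ?thesis .
  qed
  have inj: "inj_on \<sigma> X" and img: "\<sigma> ` X = X" using bij unfolding bij_betw_def by blast+
  have s0: "\<sigma> x0 \<in> X" using img x0 by blast
  have seteq: "tag_system X U' (\<sigma> x0) = (\<lambda>A. adj V2 ** A ** V2) ` tag_system X U x0"
  proof
    show "tag_system X U' (\<sigma> x0) \<subseteq> (\<lambda>A. adj V2 ** A ** V2) ` tag_system X U x0"
    proof
      fix M assume "M \<in> tag_system X U' (\<sigma> x0)"
      then obtain y where y: "y \<in> X" "y \<noteq> \<sigma> x0" "M = adj (U' (\<sigma> x0)) ** U' y"
        unfolding tag_system_def by blast
      obtain x where x: "x \<in> X" "y = \<sigma> x" using y(1) img by blast
      have "x \<noteq> x0" using x y(2) by blast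
      then have "adj (U x0) ** U x \<in> tag_system X U x0" unfolding tag_system_def using x(1) by blast
      moreover have "M = adj V2 ** (adj (U x0) ** U x) ** V2" using key[OF x(1)] y(3) x(2) by (simp only:)
      ultimately show "M \<in> (\<lambda>A. adj V2 ** A ** V2) ` tag_system X U x0" by blast
    qed
  next
    show "(\<lambda>A. adj V2 ** A ** V2) ` tag_system X U x0 \<subseteq> tag_system X U' (\<sigma> x0)"
    proof
      fix M assume "M \<in> (\<lambda>A. adj V2 ** A ** V2) ` tag_system X U x0"
      then obtain x where x: "x \<in> X" "x \<noteq> x0" "M = adj V2 ** (adj (U x0) ** U x) ** V2"
        unfolding tag_system_def by blast
      have sx: "\<sigma> x \<in> X" using img x(1) by blast
      have "\<sigma> x \<noteq> \<sigma> x0" using inj x(1,2) x0 unfolding inj_on_def by blast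
      moreover have "M = adj (U' (\<sigma> x0)) ** U' (\<sigma> x)" using key[OF x(1)] x(3) by (simp only:)
      ultimately show "M \<in> tag_system X U' (\<sigma> x0)" unfolding tag_system_def using sx by blast
    qed
  qed
  show ?thesis using s0 seteq v2 unfolding CUE_def by blast
qed
lemma cancel2:
  fixes A B M N :: "complex^'n^'n"
  assumes a: "unitary_mat A" and b: "unitary_mat B" and e: "A ** M ** B = A ** N ** B"
  shows "M = N"
proof -
  have g: "adj A ** (A ** K ** B) ** adj B = K" for K :: "complex^'n^'n"
  proof -
    have "adj A ** (A ** K ** B) ** adj B = adj A ** (A ** (K ** (B ** adj B)))"
      by (simp only: matrix_mul_assoc)
    also have "\<dots> = K" by (simp only: unit_l[OF a] unit_r2[OF b] matrix_mul_rid)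
    finally show ?thesis .
  qed
  have "M = adj A ** (A ** M ** B) ** adj B" by (rule g[symmetric])
  also have "\<dots> = adj A ** (A ** N ** B) ** adj B" by (simp only: e)
  also have "\<dots> = N" by (rule g)
  finally show ?thesis .
qed

lemma some_imp_eq:
  fixes U U' :: "'x \<Rightarrow> complex^'n^'n"
  assumes ub: "unitary_basis X U" and ub': "unitary_basis X U'" and fin: "finite X"
    and x0: "x0 \<in> X" and x0': "x0' \<in> X"
    and cue: "CUE (tag_system X U x0) (tag_system X U' x0')"
  shows "ub_equivalent X U U'"
proof -
  obtain V where v: "unitary_mat V"
    and TS: "tag_system X U' x0' = (\<lambda>A. adj V ** A ** V) ` tag_system X U x0"
    using cue unfolding CUE_def by blast
  have u0: "unitary_mat (U x0)" using ub x0 unfolding unitary_basis_def by blast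
  have u0': "unitary_mat (U' x0')" using ub' x0' unfolding unitary_basis_def by blast
  let ?P = "\<lambda>x y. y \<in> X \<and> y \<noteq> x0' \<and> adj (U' x0') ** U' y = adj V ** (adj (U x0) ** U x) ** V"
  have ex: "\<exists>y. ?P x y" if x: "x \<in> X" "x \<noteq> x0" for x
  proof -
    have "adj (U x0) ** U x \<in> tag_system X U x0" unfolding tag_system_def using x by blast
    then have "adj V ** (adj (U x0) ** U x) ** V \<in> tag_system X U' x0'" unfolding TS by (rule imageI)
    then obtain y where "y \<in> X" "y \<noteq> x0'" "adj V ** (adj (U x0) ** U x) ** V = adj (U' x0') ** U' y"
      unfolding tag_system_def by blast
    then show ?thesis by metis
  qed
  define \<tau> where "\<tau> x = (SOME y. ?P x y)" for x
  have \<tau>: "?P x (\<tau> x)" if "x \<in> X" "x \<noteq> x0" for x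
    unfolding \<tau>_def by (rule someI_ex[OF ex[OF that]])
  define \<sigma> where "\<sigma> x = (if x = x0 then x0' else \<tau> x)" for x
  define V1 where "V1 = U' x0' ** adj V ** adj (U x0)"
  have uV1: "unitary_mat V1" unfolding V1_def
    by (intro unitary_mult unitary_adj u0' v u0)
  have rep: "U' (\<sigma> x) = V1 ** U x ** V" if x: "x \<in> X" for x
  proof (cases "x = x0")
    case True
    then have s: "\<sigma> x = x0'" unfolding \<sigma>_def by simp
    have "V1 ** U x ** V = U' x0' ** (adj V ** (adj (U x0) ** (U x0 ** V)))"
      unfolding V1_def True by (simp only: matrix_mul_assoc)
    also have "\<dots> = U' x0'" by (simp only: unit_l[OF u0] unit_l2[OF v] matrix_mul_rid)
    finally show ?thesis using s by (simp only:)
  next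
    case False
    then have s: "\<sigma> x = \<tau> x" unfolding \<sigma>_def by simp
    have t: "adj (U' x0') ** U' (\<tau> x) = adj V ** (adj (U x0) ** U x) ** V" using \<tau>[OF x False] by blast
    have "U' (\<tau> x) = U' x0' ** (adj (U' x0') ** U' (\<tau> x))" by (simp only: unit_r[OF u0'])
    also have "\<dots> = U' x0' ** (adj V ** (adj (U x0) ** U x) ** V)" by (simp only: t)
    also have "\<dots> = V1 ** U x ** V" unfolding V1_def by (simp only: matrix_mul_assoc)
    finally show ?thesis using s by (simp only:)
  qed
  have sub: "\<sigma> ` X \<subseteq> X"
  proof
    fix y assume "y \<in> \<sigma> ` X"
    then obtain x where x: "x \<in> X" "y = \<sigma> x" by blast
    show "y \<in> X"
    proof (cases "x = x0")
      case True then show ?thesis using x x0' unfolding \<sigma>_def by simp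
    next
      case False then show ?thesis using x \<tau>[OF x(1) False] unfolding \<sigma>_def by simp
    qed
  qed
  have inj: "inj_on \<sigma> X"
  proof (rule inj_onI)
    fix x z assume x: "x \<in> X" and z: "z \<in> X" and e: "\<sigma> x = \<sigma> z"
    have "V1 ** U x ** V = V1 ** U z ** V" using rep[OF x] rep[OF z] e by metis
    then have "U x = U z" by (rule cancel2[OF uV1 v])
    then show "x = z" by (rule ub_inj[OF ub x z])
  qed
  have "\<sigma> ` X = X" by (rule endo_inj_surj[OF fin sub inj])
  then have bij: "bij_betw \<sigma> X X" using inj unfolding bij_betw_def by blast
  show ?thesis unfolding ub_equivalent_def using uV1 v bij rep by blast
qed
theorem theorem2p7:
  fixes X :: "'x set" and U U' :: "'x \<Rightarrow> complex^'n^'n"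
  assumes "2 \<le> CARD('n)"
    and "finite X" and "card X = CARD('n)^2"
    and "unitary_basis X U" and "unitary_basis X U'"
  shows "(ub_equivalent X U U' \<longleftrightarrow>
           (\<exists>x0\<in>X. \<exists>x0'\<in>X. CUE (tag_system X U x0) (tag_system X U' x0'))) \<and>
         ((\<exists>x0\<in>X. \<exists>x0'\<in>X. CUE (tag_system X U x0) (tag_system X U' x0')) \<longleftrightarrow>
           (\<forall>x0\<in>X. \<exists>x0'\<in>X. CUE (tag_system X U x0) (tag_system X U' x0')))"
proof -
  have "card X \<noteq> 0" using assms(3) by simp
  then have ne: "X \<noteq> {}" by (metis card.empty)
  have i_iii: "ub_equivalent X U U' \<Longrightarrow> (\<forall>x0\<in>X. \<exists>x0'\<in>X. CUE (tag_system X U x0) (tag_system X U' x0'))"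
  proof
    fix x0 assume "ub_equivalent X U U'" "x0 \<in> X"
    then show "\<exists>x0'\<in>X. CUE (tag_system X U x0) (tag_system X U' x0')" by (rule eq_imp_all)
  qed
  have ii_i: "(\<exists>x0\<in>X. \<exists>x0'\<in>X. CUE (tag_system X U x0) (tag_system X U' x0')) \<Longrightarrow> ub_equivalent X U U'"
  proof -
    assume "\<exists>x0\<in>X. \<exists>x0'\<in>X. CUE (tag_system X U x0) (tag_system X U' x0')"
    then obtain x0 x0' where "x0 \<in> X" "x0' \<in> X" "CUE (tag_system X U x0) (tag_system X U' x0')" by blast
    then show ?thesis by (rule some_imp_eq[OF assms(4,5,2)])
  qed
  have iii_ii: "(\<forall>x0\<in>X. \<exists>x0'\<in>X. CUE (tag_system X U x0) (tag_system X U' x0')) \<Longrightarrow> (\<exists>x0\<in>X. \<exists>x0'\<in>X. CUE (tag_system X U x0) (tag_system X U' x0'))"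
    using ne by blast
  show ?thesis using i_iii ii_i iii_ii by argo
qed

end
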